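(* Let $G$ be a map graph with a corresponding planar bipartite graph $B$, let $\mathcal{D}=(T,\beta_{\mathcal{D}})$ be a nice tree decomposition of $B$, and let $\mathcal{D}'$ be derived from $\mathcal{D}$ as described in the context. Let $s\in S(G)$ and let $t$ be a node of $T$ labelled introduce$(s)$ in $\mathcal{D}$, with unique child $t'$. Then $\mathsf{Original}(t)=\mathsf{Original}(t')$ and $\mathsf{Fake}(t)=\mathsf{Fake}(t')$.
   Context: All graphs are finite and simple. For a bipartite graph $B$ with bipartition $V(B)=W\uplus U$, the half-square of $B$ is the graph on $W$ in which two vertices are adjacent iff they are at distance exactly $2$ in $B$. A graph $G$ is a map graph iff it is the half-square of some planar bipartite graph $B$; such $B$ (with $W=V(G)$) is a corresponding planar bipartite graph, and $S(G)=U$ is the set of special vertices. A tree decomposition $(T,\beta)$: rooted tree $T$, bags covering all vertices and edges, and for each vertex the nodes containing it induce a connected subtree. $\gamma_{\mathcal{D}}(t)$ is the union of bags of $t$ and its descendants. A nice tree decomposition has empty root bag and each node is a leaf (empty bag), introduce$(w)$ (one child $u$, $\beta(t)=\beta(u)\cup\{w\}$, $w\notin\beta(u)$), forget$(w)$ (one child $u$, $\beta(t)=\beta(u)\setminus\{w\}$, $w\in \beta(u)$), or join (two children with identical bags equal to $\beta(t)$). The derived decomposition $\mathcal{D}'=(T,\beta_{\mathcal{D}'})$ has $\beta_{\mathcal{D}'}(t)=(\beta_{\mathcal{D}}(t)\cap V(G))\cup\bigcup_{s\in\beta_{\mathcal{D}}(t)\cap S(G)}(N_B(s)\cap\gamma_{\mathcal{D}}(t))$.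 Define $\mathsf{Original}(t)=\beta_{\mathcal{D}}(t)\cap\beta_{\mathcal{D}'}(t)$ and $\mathsf{Fake}(t)=\beta_{\mathcal{D}'}(t)\setminus\beta_{\mathcal{D}}(t)$. *)

theory Defs
  imports "HOL-Analysis.Analysis"
begin

definition simple_graph :: "'v set \<Rightarrow> 'v set set \<Rightarrow> bool" where
  "simple_graph V E \<longleftrightarrow> finite V \<and>
     (\<forall>e\<in>E. \<exists>x y. x \<noteq> y \<and> x \<in> V \<and> y \<in> V \<and> e = {x, y})"

definition bipartite_graph :: "'v set \<Rightarrow> 'v set \<Rightarrow> 'v set set \<Rightarrow> bool" where
  "bipartite_graph W U E \<longleftrightarrow> simple_graph (W \<union> U) E \<and> W \<inter> U = {} \<and>
     (\<forall>e\<in>E. \<exists>w u. w \<in> W \<and> u \<in> U \<and> e = {w, u})"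

definition planar :: "'v set \<Rightarrow> 'v set set \<Rightarrow> bool" where
  "planar V E \<longleftrightarrow> (\<exists>(pos :: 'v \<Rightarrow> real^2) (c :: 'v set \<Rightarrow> real \<Rightarrow> real^2).
     inj_on pos V \<and>
     (\<forall>e\<in>E. arc (c e) \<and> {pathstart (c e), pathfinish (c e)} = pos ` e \<and>
              (\<forall>v\<in>V. pos v \<in> path_image (c e) \<longrightarrow> v \<in> e)) \<and>
     (\<forall>e\<in>E. \<forall>e'\<in>E. e \<noteq> e' \<longrightarrow>
              path_image (c e) \<inter> path_image (c e') \<subseteq> pos ` (e \<inter> e')))"

definition nbhd :: "'v set set \<Rightarrow> 'v \<Rightarrow> 'v set" where
  "nbhd E x = {y. {x, y} \<in> E}"

text \<open>Half-square of a bipartite graph B on W: two vertices of W adjacent iff at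
distance exactly 2 in B (distinct, nonadjacent, with a common neighbour).\<close>
definition half_square :: "'v set \<Rightarrow> 'v set set \<Rightarrow> 'v set set" where
  "half_square W E = {{x, y} | x y. x \<in> W \<and> y \<in> W \<and> x \<noteq> y \<and> {x, y} \<notin> E \<and>
                        (\<exists>u. {x, u} \<in> E \<and> {u, y} \<in> E)}"

text \<open>G = (VG, EG) is a map graph with corresponding planar bipartite graph
B = (W \<union> U, EB), W = V(G), U = S(G).\<close>
definition map_graph_of :: "'v set \<Rightarrow> 'v set set \<Rightarrow> 'v set \<Rightarrow> 'v set \<Rightarrow> 'v set set \<Rightarrow> bool" where
  "map_graph_of VG EG W U EB \<longleftrightarrow> bipartite_graph W U EB \<and> planar (W \<union> U) EB \<and>
     VG = W \<and> EG = half_square W EB"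

definition rooted_tree :: "'n set \<Rightarrow> 'n \<Rightarrow> ('n \<Rightarrow> 'n) \<Rightarrow> bool" where
  "rooted_tree Nd r par \<longleftrightarrow> finite Nd \<and> r \<in> Nd \<and> par r = r \<and>
     (\<forall>t\<in>Nd. par t \<in> Nd) \<and> (\<forall>t\<in>Nd. \<exists>k. (par ^^ k) t = r)"

definition children :: "'n set \<Rightarrow> 'n \<Rightarrow> ('n \<Rightarrow> 'n) \<Rightarrow> 'n \<Rightarrow> 'n set" where
  "children Nd r par t = {u \<in> Nd. u \<noteq> r \<and> par u = t}"

text \<open>u is a descendant of t (including t itself).\<close>
definition descendant :: "'n set \<Rightarrow> ('n \<Rightarrow> 'n) \<Rightarrow> 'n \<Rightarrow> 'n \<Rightarrow> bool" where
  "descendant Nd par t u \<longleftrightarrow> u \<in> Nd \<and> (\<exists>k. (par ^^ k) u = t)"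

definition tree_adj :: "'n \<Rightarrow> ('n \<Rightarrow> 'n) \<Rightarrow> 'n \<Rightarrow> 'n \<Rightarrow> bool" where
  "tree_adj r par a b \<longleftrightarrow> (a \<noteq> r \<and> par a = b) \<or> (b \<noteq> r \<and> par b = a)"

definition tree_connected :: "'n \<Rightarrow> ('n \<Rightarrow> 'n) \<Rightarrow> 'n set \<Rightarrow> bool" where
  "tree_connected r par X \<longleftrightarrow>
     (\<forall>a\<in>X. \<forall>b\<in>X. (a, b) \<in> {(x, y). x \<in> X \<and> y \<in> X \<and> tree_adj r par x y}\<^sup>*)"

definition tree_decomposition ::
  "'v set \<Rightarrow> 'v set set \<Rightarrow> 'n set \<Rightarrow> 'n \<Rightarrow> ('n \<Rightarrow> 'n) \<Rightarrow> ('n \<Rightarrow> 'v set) \<Rightarrow> bool" where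
  "tree_decomposition V E Nd r par \<beta> \<longleftrightarrow> rooted_tree Nd r par \<and>
     (\<forall>t\<in>Nd. \<beta> t \<subseteq> V) \<and>
     (\<forall>v\<in>V. \<exists>t\<in>Nd. v \<in> \<beta> t) \<and>
     (\<forall>e\<in>E. \<exists>t\<in>Nd. e \<subseteq> \<beta> t) \<and>
     (\<forall>v\<in>V. tree_connected r par {t \<in> Nd. v \<in> \<beta> t})"

definition is_leaf_node :: "'n set \<Rightarrow> 'n \<Rightarrow> ('n \<Rightarrow> 'n) \<Rightarrow> ('n \<Rightarrow> 'v set) \<Rightarrow> 'n \<Rightarrow> bool" where
  "is_leaf_node Nd r par \<beta> t \<longleftrightarrow> children Nd r par t = {} \<and> \<beta> t = {}"

definition is_introduce :: "'n set \<Rightarrow> 'n \<Rightarrow> ('n \<Rightarrow> 'n) \<Rightarrow> ('n \<Rightarrow> 'v set) \<Rightarrow> 'n \<Rightarrow> 'v \<Rightarrow> bool" where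
  "is_introduce Nd r par \<beta> t w \<longleftrightarrow>
     (\<exists>u. children Nd r par t = {u} \<and> \<beta> t = insert w (\<beta> u) \<and> w \<notin> \<beta> u)"

definition is_forget :: "'n set \<Rightarrow> 'n \<Rightarrow> ('n \<Rightarrow> 'n) \<Rightarrow> ('n \<Rightarrow> 'v set) \<Rightarrow> 'n \<Rightarrow> 'v \<Rightarrow> bool" where
  "is_forget Nd r par \<beta> t w \<longleftrightarrow>
     (\<exists>u. children Nd r par t = {u} \<and> \<beta> t = \<beta> u - {w} \<and> w \<in> \<beta> u)"

definition is_join :: "'n set \<Rightarrow> 'n \<Rightarrow> ('n \<Rightarrow> 'n) \<Rightarrow> ('n \<Rightarrow> 'v set) \<Rightarrow> 'n \<Rightarrow> bool" where
  "is_join Nd r par \<beta> t \<longleftrightarrow>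
     (\<exists>u1 u2. u1 \<noteq> u2 \<and> children Nd r par t = {u1, u2} \<and> \<beta> u1 = \<beta> t \<and> \<beta> u2 = \<beta> t)"

definition nice_tree_decomposition ::
  "'v set \<Rightarrow> 'v set set \<Rightarrow> 'n set \<Rightarrow> 'n \<Rightarrow> ('n \<Rightarrow> 'n) \<Rightarrow> ('n \<Rightarrow> 'v set) \<Rightarrow> bool" where
  "nice_tree_decomposition V E Nd r par \<beta> \<longleftrightarrow> tree_decomposition V E Nd r par \<beta> \<and>
     \<beta> r = {} \<and>
     (\<forall>t\<in>Nd. is_leaf_node Nd r par \<beta> t \<or> (\<exists>w. is_introduce Nd r par \<beta> t w) \<or>
              (\<exists>w. is_forget Nd r par \<beta> t w) \<or> is_join Nd r par \<beta> t)"

definition gamma :: "'n set \<Rightarrow> ('n \<Rightarrow> 'n) \<Rightarrow> ('n \<Rightarrow> 'v set) \<Rightarrow> 'n \<Rightarrow> 'v set" where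
  "gamma Nd par \<beta> t = \<Union>{\<beta> u | u. descendant Nd par t u}"

definition derived_bag ::
  "'v set \<Rightarrow> 'v set \<Rightarrow> 'v set set \<Rightarrow> 'n set \<Rightarrow> ('n \<Rightarrow> 'n) \<Rightarrow> ('n \<Rightarrow> 'v set) \<Rightarrow> 'n \<Rightarrow> 'v set" where
  "derived_bag VG SG EB Nd par \<beta> t =
     (\<beta> t \<inter> VG) \<union> \<Union>{nbhd EB s \<inter> gamma Nd par \<beta> t | s. s \<in> \<beta> t \<inter> SG}"

definition Original ::
  "'v set \<Rightarrow> 'v set \<Rightarrow> 'v set set \<Rightarrow> 'n set \<Rightarrow> ('n \<Rightarrow> 'n) \<Rightarrow> ('n \<Rightarrow> 'v set) \<Rightarrow> 'n \<Rightarrow> 'v set" where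
  "Original VG SG EB Nd par \<beta> t = \<beta> t \<inter> derived_bag VG SG EB Nd par \<beta> t"

definition Fake ::
  "'v set \<Rightarrow> 'v set \<Rightarrow> 'v set set \<Rightarrow> 'n set \<Rightarrow> ('n \<Rightarrow> 'n) \<Rightarrow> ('n \<Rightarrow> 'v set) \<Rightarrow> 'n \<Rightarrow> 'v set" where
  "Fake VG SG EB Nd par \<beta> t = derived_bag VG SG EB Nd par \<beta> t - \<beta> t"

end

theory Submission
  imports Defs
begin

lemma funpow_closed:
  assumes "rooted_tree Nd r par" "u \<in> Nd"
  shows "(par ^^ k) u \<in> Nd"
  using assms by (induction k) (auto simp: rooted_tree_def)

lemma funpow_root:
  assumes "par r = r"
  shows "(par ^^ k) r = r"
  using assms by (induction k) auto

lemma iter_fix: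
  assumes "(par ^^ Suc k) x = x"
  shows "(par ^^ (n * Suc k)) x = x"
proof (induction n)
  case 0 then show ?case by simp
next
  case (Suc n)
  have eq: "Suc n * Suc k = n * Suc k + Suc k" by simp
  have "(par ^^ (Suc n * Suc k)) x = (par ^^ (n * Suc k)) ((par ^^ Suc k) x)"
    by (simp only: eq funpow_add o_apply)
  also have "\<dots> = (par ^^ (n * Suc k)) x" using assms by (simp only:)
  also have "\<dots> = x" using Suc.IH by (simp only:)
  finally show ?case .
qed

lemma parent_not_desc:
  assumes "rooted_tree Nd r par" "t' \<in> Nd" "t' \<noteq> r"
  shows "\<not> descendant Nd par t' (par t')"
proof
  assume "descendant Nd par t' (par t')"
  then obtain k where k: "(par ^^ k) (par t') = t'" by (auto simp: descendant_def)
  hence fx: "(par ^^ Suc k) t' = t'" by (simp only: funpow_Suc_right o_apply)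
  obtain m where m: "(par ^^ m) t' = r" using assms by (auto simp: rooted_tree_def)
  have "(par ^^ (m * Suc k)) t' = t'" by (rule iter_fix[OF fx])
  moreover have "(par ^^ (m * Suc k)) t' = (par ^^ (m*k)) ((par ^^ m) t')"
  proof -
    have "m * Suc k = m*k + m" by simp
    then show ?thesis by (simp only: funpow_add o_apply)
  qed
  moreover have "(par ^^ (m*k)) r = r" using assms funpow_root by (auto simp: rooted_tree_def)
  ultimately show False using m assms(3) by simp
qed

lemma lemmaA:
  assumes "(a,b) \<in> {(x,y). x\<in>X \<and> y\<in>X \<and> tree_adj r par x y}\<^sup>*" "X \<subseteq> Nd"
    "descendant Nd par t' a" "rooted_tree Nd r par"
  shows "descendant Nd par t' b \<or> t' \<in> X"
  using assms(1)
proof (induction rule: rtrancl_induct)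
  case base then show ?case using assms(3) by simp
next
  case (step y z)
  show ?case
  proof (cases "t' \<in> X")
    case True then show ?thesis by simp
  next
    case False
    with step.IH obtain k where k: "(par ^^ k) y = t'" "y \<in> Nd" by (auto simp: descendant_def)
    have yz: "y \<in> X" "z \<in> X" "tree_adj r par y z" using step.hyps(2) by auto
    hence zN: "z \<in> Nd" using assms(2) by auto
    from yz(3) show ?thesis unfolding tree_adj_def
    proof
      assume "y \<noteq> r \<and> par y = z"
      show ?thesis
      proof (cases k)
        case 0 then show ?thesis using k yz by simp
      next
        case (Suc m)
        then have "(par ^^ m) z = t'" using k \<open>y \<noteq> r \<and> par y = z\<close> by (metis funpow_Suc_right comp_apply)
        then show ?thesis using zN by (auto simp: descendant_def)
      qed
    next
      assume "z \<noteq> r \<and> par z = y"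
      then have "(par ^^ Suc k) z = t'" using k by (simp only: funpow_Suc_right o_apply)
      then show ?thesis using zN unfolding descendant_def by blast
    qed
  qed
qed

lemma lemmaA':
  assumes "tree_connected r par X" "X \<subseteq> Nd" "a \<in> X" "b \<in> X"
    "descendant Nd par t' a" "\<not> descendant Nd par t' b" "rooted_tree Nd r par"
  shows "t' \<in> X"
  using lemmaA[of a b X r par Nd t'] assms by (auto simp: tree_connected_def)

lemma desc_split:
  assumes "rooted_tree Nd r par" "children Nd r par t = {t'}" "t \<in> Nd"
  shows "descendant Nd par t u \<longleftrightarrow> u = t \<or> descendant Nd par t' u"
proof
  assume d: "descendant Nd par t u"
  then have uN: "u \<in> Nd" by (simp add: descendant_def)
  define k where "k = (LEAST k. (par ^^ k) u = t)"
  have k: "(par ^^ k) u = t" unfolding k_def using d by (auto simp: descendant_def intro: LeastI)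
  show "u = t \<or> descendant Nd par t' u"
  proof (cases k)
    case 0 then show ?thesis using k by simp
  next
    case (Suc m)
    define c where "c = (par ^^ m) u"
    have pc: "par c = t" using k Suc by (simp add: c_def)
    have cN: "c \<in> Nd" using funpow_closed[OF assms(1) uN] c_def by simp
    have "c \<noteq> r"
    proof
      assume "c = r"
      then have "(par ^^ m) u = t" using pc assms(1) c_def by (auto simp: rooted_tree_def)
      then have "k \<le> m" unfolding k_def by (rule Least_le)
      then show False using Suc by simp
    qed
    then have "c \<in> children Nd r par t" using cN pc by (simp add: children_def)
    then have "c = t'" using assms(2) by simp
    then show ?thesis using uN c_def by (auto simp: descendant_def)
  qed
next
  assume "u = t \<or> descendant Nd par t' u"
  then show "descendant Nd par t u"
  proof
    assume "u = t" then show ?thesis using assms(3) by (auto simp: descendant_def intro: exI[of _ 0])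
  next
    assume "descendant Nd par t' u"
    then obtain k where "u \<in> Nd" "(par ^^ k) u = t'" by (auto simp: descendant_def)
    moreover have "par t' = t" using assms(2) by (auto simp: children_def)
    ultimately have "(par ^^ Suc k) u = t" by simp
    then show ?thesis using \<open>u \<in> Nd\<close> unfolding descendant_def by blast
  qed
qed

theorem lemma12:
  fixes VG W U :: "'v set" and EG EB :: "'v set set"
    and Nd :: "'n set" and r :: 'n and par :: "'n \<Rightarrow> 'n" and \<beta> :: "'n \<Rightarrow> 'v set"
    and s :: 'v and t t' :: 'n
  assumes "map_graph_of VG EG W U EB"
    and "nice_tree_decomposition (W \<union> U) EB Nd r par \<beta>"
    and "s \<in> U"
    and "t \<in> Nd"
    and "is_introduce Nd r par \<beta> t s"
    and "children Nd r par t = {t'}"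
  shows "Original VG U EB Nd par \<beta> t = Original VG U EB Nd par \<beta> t' \<and>
         Fake VG U EB Nd par \<beta> t = Fake VG U EB Nd par \<beta> t'"
proof -
  have VG: "VG = W" and bip: "bipartite_graph W U EB" using assms(1) by (auto simp: map_graph_of_def)
  have disj: "W \<inter> U = {}" and edges: "\<forall>e\<in>EB. \<exists>w u. w \<in> W \<and> u \<in> U \<and> e = {w, u}"
    using bip by (auto simp: bipartite_graph_def)
  have td: "tree_decomposition (W \<union> U) EB Nd r par \<beta>" using assms(2) by (simp add: nice_tree_decomposition_def)
  have rt: "rooted_tree Nd r par" and bags: "\<forall>t\<in>Nd. \<beta> t \<subseteq> W \<union> U"
    and ecov: "\<forall>e\<in>EB. \<exists>t\<in>Nd. e \<subseteq> \<beta> t"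
    and conn: "\<forall>v\<in>W \<union> U. tree_connected r par {t \<in> Nd. v \<in> \<beta> t}"
    using td by (auto simp: tree_decomposition_def)
  have t'N: "t' \<in> Nd" "t' \<noteq> r" "par t' = t" using assms(6) by (auto simp: children_def)
  have bt: "\<beta> t = insert s (\<beta> t')" "s \<notin> \<beta> t'" using assms(5,6) by (auto simp: is_introduce_def)
  have nb: "y \<in> W" if "y \<in> nbhd EB x" "x \<in> U" for x y
  proof -
    from that have "{x, y} \<in> EB" by (simp add: nbhd_def)
    then obtain w u where "w \<in> W" "u \<in> U" "{x,y} = {w,u}" using edges by blast
    then show ?thesis using that(2) disj by (auto simp: doubleton_eq_iff)
  qed
  let ?g = "gamma Nd par \<beta>"
  have gt: "?g t = \<beta> t \<union> ?g t'"
  proof -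
    have "{\<beta> u |u. descendant Nd par t u} = insert (\<beta> t) {\<beta> u |u. descendant Nd par t' u}"
      using desc_split[OF rt assms(6) assms(4)] by auto
    then show ?thesis unfolding gamma_def by simp
  qed
  have bt'g: "\<beta> t' \<subseteq> ?g t'"
  proof -
    have "descendant Nd par t' t'" using t'N(1) unfolding descendant_def by (metis funpow_0)
    then show ?thesis unfolding gamma_def by blast
  qed
  have sng: "s \<notin> ?g t'"
  proof
    assume "s \<in> ?g t'"
    then obtain u where u: "descendant Nd par t' u" "s \<in> \<beta> u" unfolding gamma_def by blast
    have "\<not> descendant Nd par t' t" using parent_not_desc[OF rt t'N(1,2)] t'N(3) by simp
    then have "t' \<in> {x \<in> Nd. s \<in> \<beta> x}"
      using lemmaA'[of r par "{x \<in> Nd. s \<in> \<beta> x}" Nd u t t'] conn assms(3,4) u bt rt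
      by (auto simp: descendant_def)
    then show False using bt by simp
  qed
  have key: "nbhd EB s \<inter> ?g t' \<subseteq> \<beta> t' \<inter> W"
  proof
    fix w assume w: "w \<in> nbhd EB s \<inter> ?g t'"
    have wW: "w \<in> W" using w nb assms(3) by blast
    obtain u where u: "descendant Nd par t' u" "w \<in> \<beta> u" using w unfolding gamma_def by blast
    have "{s, w} \<in> EB" using w by (simp add: nbhd_def)
    then obtain x where x: "x \<in> Nd" "{s, w} \<subseteq> \<beta> x" using ecov by blast
    have "\<not> descendant Nd par t' x"
    proof
      assume "descendant Nd par t' x"
      then have "s \<in> ?g t'" using x unfolding gamma_def by blast
      then show False using sng by simp
    qed
    then have "t' \<in> {y \<in> Nd. w \<in> \<beta> y}"
      using lemmaA'[of r par "{y \<in> Nd. w \<in> \<beta> y}" Nd u x t'] conn wW u x rt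
      by (auto simp: descendant_def)
    then show "w \<in> \<beta> t' \<inter> W" using wW by simp
  qed
  have other: "nbhd EB s' \<inter> ?g t = nbhd EB s' \<inter> ?g t'" if "s' \<in> U" for s'
  proof -
    have ns: "s \<notin> nbhd EB s'" using nb[OF _ that] assms(3) disj by blast
    have eq: "insert s (\<beta> t') \<union> ?g t' = insert s (?g t')" using bt'g by (simp add: Un_absorb1)
    have "nbhd EB s' \<inter> ?g t = nbhd EB s' \<inter> insert s (?g t')" by (simp only: gt bt(1) eq)
    also have "\<dots> = nbhd EB s' \<inter> ?g t'" by (rule Int_insert_right_if0[OF ns])
    finally show ?thesis .
  qed
  let ?D = "derived_bag VG U EB Nd par \<beta>"
  have Dt: "?D t = ?D t' \<union> (nbhd EB s \<inter> ?g t)"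
  proof -
    have a: "\<beta> t \<inter> VG = \<beta> t' \<inter> VG" proof -
      have "s \<notin> W" using assms(3) disj by blast
      then show ?thesis unfolding bt(1) VG by simp
    qed
    have b: "\<beta> t \<inter> U = insert s (\<beta> t' \<inter> U)" unfolding bt(1) using assms(3) by simp
    have c: "{nbhd EB s' \<inter> ?g t | s'. s' \<in> \<beta> t \<inter> U} =
          insert (nbhd EB s \<inter> ?g t) {nbhd EB s' \<inter> ?g t' | s'. s' \<in> \<beta> t' \<inter> U}"
      unfolding b by (auto simp: other) (metis other)
    show ?thesis unfolding derived_bag_def a c by (simp only: Union_insert Un_ac)
  qed
  have "nbhd EB s \<inter> ?g t = nbhd EB s \<inter> ?g t'"
    using other[OF assms(3)] .
  then have "nbhd EB s \<inter> ?g t \<subseteq> \<beta> t' \<inter> VG" using key VG by simp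
  moreover have "\<beta> t' \<inter> VG \<subseteq> ?D t'" unfolding derived_bag_def by (rule Un_upper1)
  ultimately have "nbhd EB s \<inter> ?g t \<subseteq> ?D t'" by (rule subset_trans)
  then have D: "?D t = ?D t'" using Dt by (simp only: Un_absorb2)
  have "\<forall>X \<in> {nbhd EB s' \<inter> ?g t' | s'. s' \<in> \<beta> t' \<inter> U}. X \<subseteq> W" using nb by blast
  then have "\<Union>{nbhd EB s' \<inter> ?g t' | s'. s' \<in> \<beta> t' \<inter> U} \<subseteq> W" using Union_least by blast
  then have DW: "?D t' \<subseteq> W" unfolding derived_bag_def VG by blast
  have sD: "s \<notin> ?D t'" using DW assms(3) disj by blast
  show ?thesis unfolding Original_def Fake_def D bt(1) using sD by auto
qed

end
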